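(* Let $A\in\mathbb{R}^{m\times n}$, $y\in\mathbb{R}^m$, $\lambda>0$, and let $x^\star$ be a global minimizer of $\min_{x}\frac{1}{2\lambda}\|Ax-y\|^2+\|Lx\|_{1,2}$. Let $\beta^\star=-\frac1\lambda A^\top(Ax^\star-y)$, let $\widehat{L}=L-P_{T_z}LP_{T_x^\perp}$ be the effective lifting operator associated with $x^\star$, $\widehat{u}_{\min}=\widehat{L}(\widehat{L}^\top\widehat{L})^{-1}\beta^\star$, and let $u^\dagger\in\mathbb{R}^p$ be given by $u^\dagger_{J_t}=(\widehat{u}_{\min})_{J_t}$ if $x^\star_{G_t}=0$ and $u^\dagger_{J_t}=x^\star_{G_t}/\|x^\star_{G_t}\|$ if $x^\star_{G_t}\ne0$. Then for every $t\in\{1,\dots,N\}$, $\|u^\dagger_{J_t}\|\le\|\beta^\star_{G_t}\|/w_t$.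
   Context: Let $n,N\in\mathbb{N}$, let $G_1,\dots,G_N\subseteq\{1,\dots,n\}$ be nonempty groups, possibly overlapping, with $\bigcup_iG_i=\{1,\dots,n\}$, and weights $w_i>0$. $x_G$ is the subvector of $x$ indexed by $G$ (increasing order). Let $p=\sum_i|G_i|$, partition $\{1,\dots,p\}$ into consecutive blocks $J_i=\{\sum_{j<i}|G_j|+1,\dots,\sum_{j\le i}|G_j|\}$, and define $L\in\mathbb{R}^{p\times n}$ by $(Lx)_{J_i}=w_ix_{G_i}$; $\|z\|_{1,2}=\sum_i\|z_{J_i}\|$ (Euclidean), so $\|Lx\|_{1,2}=\sum_iw_i\|x_{G_i}\|$. For $x\in\mathbb{R}^n$: $\mathcal{I}_x=\{t:x_{G_t}\ne0\}$; $\mathcal{E}_x=\{1,\dots,n\}\setminus\bigcup_{t\notin\mathcal{I}_x}G_t$, $T_x=\{x':\mathrm{supp}(x')\subseteq\mathcal{E}_x\}$; $\mathcal{E}_z=\bigcup_{t\in\mathcal{I}_x}J_t$, $T_z=\{z':\mathrm{supp}(z')\subseteq\mathcal{E}_z\}$. $P_T$ is the orthogonal (coordinate) projection onto $T$, $T^\perp$ the orthogonal complement. $\widehat{L}^\top\widehat{L}$ is invertible. *)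

theory Defs
  imports "Jordan_Normal_Form.Matrix" "Jordan_Normal_Form.Gauss_Jordan_Elimination"
begin

text \<open>Conventions: coordinates of R^n are 0..<n, groups are indexed 0..<N
  (0-based shift of the paper's 1..n and 1..N).  A group is G i :: nat set.\<close>

definition enorm :: "real vec \<Rightarrow> real" where
  "enorm v = sqrt (v \<bullet> v)"

definition gelem :: "nat set \<Rightarrow> nat \<Rightarrow> nat" where
  "gelem S k = sorted_list_of_set S ! k"

definition subv :: "real vec \<Rightarrow> nat set \<Rightarrow> real vec" where
  "subv x S = vec (card S) (\<lambda>k. x $ gelem S k)"

definition off :: "(nat \<Rightarrow> nat set) \<Rightarrow> nat \<Rightarrow> nat" where
  "off G i = (\<Sum>j<i. card (G j))"

definition pdim :: "nat \<Rightarrow> (nat \<Rightarrow> nat set) \<Rightarrow> nat" where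
  "pdim N G = off G N"

definition Jblock :: "(nat \<Rightarrow> nat set) \<Rightarrow> nat \<Rightarrow> nat set" where
  "Jblock G i = {off G i ..< off G (Suc i)}"

definition blkidx :: "nat \<Rightarrow> (nat \<Rightarrow> nat set) \<Rightarrow> nat \<Rightarrow> nat" where
  "blkidx N G r = (THE i. i < N \<and> r \<in> Jblock G i)"

definition blk :: "(nat \<Rightarrow> nat set) \<Rightarrow> real vec \<Rightarrow> nat \<Rightarrow> real vec" where
  "blk G z i = vec (card (G i)) (\<lambda>k. z $ (off G i + k))"

text \<open>the lifting operator L in R^{p x n}: (Lx)_{J_i} = w_i x_{G_i}\<close>
definition Lop :: "nat \<Rightarrow> nat \<Rightarrow> (nat \<Rightarrow> nat set) \<Rightarrow> (nat \<Rightarrow> real) \<Rightarrow> real mat" where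
  "Lop n N G w = mat (pdim N G) n (\<lambda>(r, c).
     (let i = blkidx N G r in if c = gelem (G i) (r - off G i) then w i else 0))"

definition norm12 :: "nat \<Rightarrow> (nat \<Rightarrow> nat set) \<Rightarrow> real vec \<Rightarrow> real" where
  "norm12 N G z = (\<Sum>i<N. enorm (blk G z i))"

definition objective :: "real mat \<Rightarrow> real vec \<Rightarrow> real \<Rightarrow> nat \<Rightarrow> nat \<Rightarrow>
    (nat \<Rightarrow> nat set) \<Rightarrow> (nat \<Rightarrow> real) \<Rightarrow> real vec \<Rightarrow> real" where
  "objective A y lam n N G w x =
     1 / (2 * lam) * (enorm (A *\<^sub>v x - y))\<^sup>2 + norm12 N G (Lop n N G w *\<^sub>v x)"

definition Iset :: "nat \<Rightarrow> (nat \<Rightarrow> nat set) \<Rightarrow> real vec \<Rightarrow> nat set" where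
  "Iset N G x = {t. t < N \<and> subv x (G t) \<noteq> 0\<^sub>v (card (G t))}"

definition Eset_x :: "nat \<Rightarrow> nat \<Rightarrow> (nat \<Rightarrow> nat set) \<Rightarrow> real vec \<Rightarrow> nat set" where
  "Eset_x n N G x = {0..<n} - (\<Union>t \<in> {t. t < N \<and> t \<notin> Iset N G x}. G t)"

definition Eset_z :: "nat \<Rightarrow> (nat \<Rightarrow> nat set) \<Rightarrow> real vec \<Rightarrow> nat set" where
  "Eset_z N G x = (\<Union>t \<in> Iset N G x. Jblock G t)"

definition coord_proj :: "nat \<Rightarrow> nat set \<Rightarrow> real mat" where
  "coord_proj d S = mat d d (\<lambda>(i, j). if i = j \<and> i \<in> S then 1 else 0)"

definition P_Tx :: "nat \<Rightarrow> nat \<Rightarrow> (nat \<Rightarrow> nat set) \<Rightarrow> real vec \<Rightarrow> real mat" where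
  "P_Tx n N G x = coord_proj n (Eset_x n N G x)"

definition P_Tx_perp :: "nat \<Rightarrow> nat \<Rightarrow> (nat \<Rightarrow> nat set) \<Rightarrow> real vec \<Rightarrow> real mat" where
  "P_Tx_perp n N G x = 1\<^sub>m n - P_Tx n N G x"

definition P_Tz :: "nat \<Rightarrow> (nat \<Rightarrow> nat set) \<Rightarrow> real vec \<Rightarrow> real mat" where
  "P_Tz N G x = coord_proj (pdim N G) (Eset_z N G x)"

definition Lhat :: "nat \<Rightarrow> nat \<Rightarrow> (nat \<Rightarrow> nat set) \<Rightarrow> (nat \<Rightarrow> real) \<Rightarrow> real vec \<Rightarrow> real mat" where
  "Lhat n N G w x = Lop n N G w - P_Tz N G x * Lop n N G w * P_Tx_perp n N G x"

end

theory Submission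
  imports Defs
begin


lemma sum_gelem:
  assumes "finite S"
  shows "(\<Sum>k<card S. f (gelem S k)) = (\<Sum>j\<in>S. f j)"
proof -
  define xs where "xs = sorted_list_of_set S"
  have d: "distinct xs" and s: "set xs = S" and l: "length xs = card S"
    using assms by (auto simp: xs_def)
  have "(\<Sum>j\<in>S. f j) = sum_list (map f xs)"
    using sum.distinct_set_conv_list[OF d, of f] s by simp
  also have "\<dots> = (\<Sum>k=0..<length xs. f (xs ! k))"
    by (simp add: sum_list_sum_nth)
  finally show ?thesis by (simp add: l xs_def gelem_def atLeast0LessThan)
qed

lemma gelem_in:
  assumes "finite S" "k < card S" shows "gelem S k \<in> S"
  using assms by (metis gelem_def nth_mem sorted_list_of_set(1) sorted_list_of_set(3) distinct_card)

lemma gelem_surj: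
  assumes "finite S" "j \<in> S" shows "\<exists>k<card S. gelem S k = j"
  using assms by (metis gelem_def in_set_conv_nth sorted_list_of_set(1) sorted_list_of_set(3) distinct_card)

lemma enorm_vec: "enorm (vec d f) = sqrt (\<Sum>k<d. (f k)^2)"
  by (simp add: enorm_def scalar_prod_def power2_eq_square atLeast0LessThan)

lemma enorm_sq: "(enorm v)^2 = (\<Sum>k<dim_vec v. (v $ k)^2)"
proof -
  have "v \<bullet> v = (\<Sum>k<dim_vec v. (v $ k)^2)"
    by (simp add: scalar_prod_def power2_eq_square atLeast0LessThan)
  moreover have "0 \<le> (\<Sum>k<dim_vec v. (v $ k)^2)" by (simp add: sum_nonneg)
  ultimately show ?thesis by (simp add: enorm_def)
qed

lemma enorm_subv:
  assumes "finite S" shows "enorm (subv v S) = sqrt (\<Sum>j\<in>S. (v $ j)^2)"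
  unfolding subv_def enorm_vec using sum_gelem[OF assms, of "\<lambda>j. (v $ j)^2"] by simp

lemma off_Suc: "off G (Suc i) = off G i + card (G i)"
  by (simp add: off_def)

lemma off_mono: "i \<le> j \<Longrightarrow> off G i \<le> off G j"
  unfolding off_def by (rule sum_mono2) auto

lemma blkidx_eq:
  assumes "t < N" "k < card (G t)"
  shows "blkidx N G (off G t + k) = t"
  unfolding blkidx_def
proof (rule the_equality)
  show "t < N \<and> off G t + k \<in> Jblock G t" using assms by (simp add: Jblock_def off_Suc)
next
  fix i assume h: "i < N \<and> off G t + k \<in> Jblock G i"
  show "i = t"
  proof (rule ccontr)
    assume "i \<noteq> t"
    then consider "Suc i \<le> t" | "Suc t \<le> i" by linarith
    then show False
    proof cases
      case 1 then have "off G (Suc i) \<le> off G t" by (rule off_mono)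
      then show False using h by (simp add: Jblock_def)
    next
      case 2 then have "off G (Suc t) \<le> off G i" by (rule off_mono)
      then show False using h assms by (simp add: Jblock_def off_Suc)
    qed
  qed
qed

lemma off_lt_pdim:
  assumes "t < N" "k < card (G t)" shows "off G t + k < pdim N G"
proof -
  have "off G (Suc t) \<le> off G N" using assms by (intro off_mono) simp
  then show ?thesis using assms by (simp add: pdim_def off_Suc)
qed

lemma Jblock_other:
  assumes "k < card (G t)" "s \<noteq> t" shows "off G t + k \<notin> Jblock G s"
proof
  assume h: "off G t + k \<in> Jblock G s"
  from assms(2) consider "Suc s \<le> t" | "Suc t \<le> s" by linarith
  then show False
  proof cases
    case 1 then have "off G (Suc s) \<le> off G t" by (rule off_mono)
    then show False using h by (simp add: Jblock_def)
  next
    case 2 then have "off G (Suc t) \<le> off G s" by (rule off_mono)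
    then show False using h assms by (simp add: Jblock_def off_Suc)
  qed
qed

lemma Lop_entry:
  assumes "t < N" "k < card (G t)" "c < n"
  shows "Lop n N G w $$ (off G t + k, c) = (if c = gelem (G t) k then w t else 0)"
  using assms off_lt_pdim[of t N k G] blkidx_eq[of t N k G]
  by (simp add: Lop_def)

lemma sum_single:
  fixes f :: "nat \<Rightarrow> real"
  assumes "g < n"
  shows "(\<Sum>c\<in>{0..<n}. (if c = g then a else 0) * f c) = a * f g"
proof -
  have "(\<Sum>c\<in>{0..<n}. (if c = g then a else 0) * f c) = (\<Sum>c\<in>{0..<n}. (if g = c then a * f c else 0))"
    by (intro sum.cong) auto
  then show ?thesis using assms by simp
qed

lemma Lop_mult:
  assumes "t < N" "k < card (G t)" "v \<in> carrier_vec n" "gelem (G t) k < n"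
  shows "(Lop n N G w *\<^sub>v v) $ (off G t + k) = w t * v $ gelem (G t) k"
proof -
  have r: "off G t + k < dim_row (Lop n N G w)"
    using off_lt_pdim[of t N k G] assms by (simp add: Lop_def)
  have "(Lop n N G w *\<^sub>v v) $ (off G t + k) = (\<Sum>c\<in>{0..<n}. Lop n N G w $$ (off G t + k, c) * v $ c)"
    using r assms(3) by (simp add: scalar_prod_def Lop_def)
  also have "\<dots> = (\<Sum>c\<in>{0..<n}. (if c = gelem (G t) k then w t else 0) * v $ c)"
    using Lop_entry[of t N k G _ n w] assms by (intro sum.cong) auto
  also have "\<dots> = w t * v $ gelem (G t) k" by (rule sum_single[OF assms(4)])
  finally show ?thesis .
qed


lemma groups_finite:
  fixes n :: nat and G :: "nat \<Rightarrow> nat set"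
  assumes cover: "(\<Union>i\<in>{..<N}. G i) = {0..<n}" and "s < N"
  shows "finite (G s)" "G s \<subseteq> {0..<n}"
proof -
  show "G s \<subseteq> {0..<n}" using assms by blast
  then show "finite (G s)" by (rule finite_subset) simp
qed

lemma norm12_Lop:
  assumes cover: "(\<Union>i\<in>{..<N}. G i) = {0..<n}" and wpos: "\<forall>i<N. w i > 0"
    and v: "v \<in> carrier_vec n"
  shows "norm12 N G (Lop n N G w *\<^sub>v v) = (\<Sum>s<N. w s * sqrt (\<Sum>l\<in>G s. (v $ l)^2))"
  unfolding norm12_def
proof (rule sum.cong[OF refl])
  fix s assume s: "s \<in> {..<N}"
  have fin: "finite (G s)" and sub: "G s \<subseteq> {0..<n}" using groups_finite[OF cover, of s] s by auto
  have "enorm (blk G (Lop n N G w *\<^sub>v v) s) = sqrt (\<Sum>k<card (G s). ((Lop n N G w *\<^sub>v v) $ (off G s + k))^2)"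
    by (simp add: blk_def enorm_vec)
  also have "\<dots> = sqrt (\<Sum>k<card (G s). (w s * v $ gelem (G s) k)^2)"
  proof -
    have "(Lop n N G w *\<^sub>v v) $ (off G s + k) = w s * v $ gelem (G s) k" if "k < card (G s)" for k
      using Lop_mult[of s N k G v n w] s v gelem_in[OF fin that] sub that by auto
    then show ?thesis by simp
  qed
  also have "\<dots> = sqrt (\<Sum>l\<in>G s. (w s * v $ l)^2)"
    using sum_gelem[OF fin, of "\<lambda>l. (w s * v $ l)^2"] by simp
  also have "\<dots> = sqrt ((w s)^2 * (\<Sum>l\<in>G s. (v $ l)^2))"
    by (simp add: power_mult_distrib sum_distrib_left)
  also have "\<dots> = w s * sqrt (\<Sum>l\<in>G s. (v $ l)^2)"
  proof -
    have "w s > 0" using wpos s by simp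
    then show ?thesis by (simp add: real_sqrt_mult)
  qed
  finally show "enorm (blk G (Lop n N G w *\<^sub>v v) s) = w s * sqrt (\<Sum>l\<in>G s. (v $ l)^2)" .
qed

lemma obj_formula:
  assumes cover: "(\<Union>i\<in>{..<N}. G i) = {0..<n}" and wpos: "\<forall>i<N. w i > 0"
    and A: "A \<in> carrier_mat m n" and y: "y \<in> carrier_vec m" and x: "x \<in> carrier_vec n"
  shows "objective A y lam n N G w x =
     1 / (2 * lam) * (\<Sum>r<m. ((A *\<^sub>v x) $ r - y $ r)^2) + (\<Sum>s<N. w s * sqrt (\<Sum>l\<in>G s. (x $ l)^2))"
proof -
  have "(enorm (A *\<^sub>v x - y))^2 = (\<Sum>r<m. ((A *\<^sub>v x) $ r - y $ r)^2)"
    unfolding enorm_sq using A y by (intro sum.cong) auto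
  then show ?thesis unfolding objective_def norm12_Lop[OF cover wpos x] by simp
qed

lemma dir_entries:
  fixes A :: "real mat" and x :: "real vec"
  assumes A: "A \<in> carrier_mat m n" and x: "x \<in> carrier_vec n" and i: "i < n"
  shows "\<And>r. r < m \<Longrightarrow> (A *\<^sub>v (x + e \<cdot>\<^sub>v unit_vec n i)) $ r = (A *\<^sub>v x) $ r + e * A $$ (r, i)"
    and "\<And>l. l < n \<Longrightarrow> (x + e \<cdot>\<^sub>v unit_vec n i) $ l = x $ l + (if l = i then e else 0)"
    and "x + e \<cdot>\<^sub>v unit_vec n i \<in> carrier_vec n"
proof -
  fix r assume r: "r < m"
  have eq: "(A *\<^sub>v (x + e \<cdot>\<^sub>v unit_vec n i)) = A *\<^sub>v x + e \<cdot>\<^sub>v (A *\<^sub>v unit_vec n i)"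
    using A x by (simp add: mult_add_distrib_mat_vec mult_mat_vec[OF A unit_vec_carrier])
  then show "(A *\<^sub>v (x + e \<cdot>\<^sub>v unit_vec n i)) $ r = (A *\<^sub>v x) $ r + e * A $$ (r, i)"
  proof -
    have "(A *\<^sub>v unit_vec n i) $ r = row A r \<bullet> unit_vec n i" using A r by simp
    also have "\<dots> = row A r $ i" using i by (rule scalar_prod_right_unit)
    also have "\<dots> = A $$ (r, i)" using A r i by simp
    finally have u: "(A *\<^sub>v unit_vec n i) $ r = A $$ (r, i)" .
    have "(A *\<^sub>v (x + e \<cdot>\<^sub>v unit_vec n i)) $ r = (A *\<^sub>v x + e \<cdot>\<^sub>v (A *\<^sub>v unit_vec n i)) $ r"
      using eq by (rule arg_cong)
    also have "\<dots> = (A *\<^sub>v x) $ r + e * (A *\<^sub>v unit_vec n i) $ r"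
      using A r by (simp del: index_mult_mat_vec)
    finally show ?thesis using u by simp
  qed
next
  fix l assume "l < n" then show "(x + e \<cdot>\<^sub>v unit_vec n i) $ l = x $ l + (if l = i then e else 0)"
    using x by (simp add: unit_vec_def)
next
  show "x + e \<cdot>\<^sub>v unit_vec n i \<in> carrier_vec n" using x by simp
qed



lemma deriv_opt:
  fixes A :: "real mat" and xs y :: "real vec"
  assumes cover: "(\<Union>i\<in>{..<N}. G i) = {0..<n}" and wpos: "\<forall>i<N. w i > 0"
    and A: "A \<in> carrier_mat m n" and y: "y \<in> carrier_vec m" and lam: "lam > 0"
    and xs: "xs \<in> carrier_vec n"
    and xs_min: "\<forall>x \<in> carrier_vec n. objective A y lam n N G w xs \<le> objective A y lam n N G w x"
    and i: "i < n" and xi: "xs $ i \<noteq> 0"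
  shows "(- 1 / lam) * (\<Sum>r<m. A $$ (r, i) * ((A *\<^sub>v xs) $ r - y $ r)) =
         xs $ i * (\<Sum>s<N. if i \<in> G s then w s / sqrt (\<Sum>l\<in>G s. (xs $ l)^2) else 0)"
proof -
  define R where "R r = (A *\<^sub>v xs) $ r - y $ r" for r
  define a where "a r = A $$ (r, i)" for r
  define Q where "Q s = (\<Sum>l\<in>G s. (xs $ l)^2)" for s
  define F where "F e = 1 / (2 * lam) * (\<Sum>r<m. (R r + e * a r)^2) +
      (\<Sum>s<N. w s * sqrt (\<Sum>l\<in>G s. (xs $ l + (if l = i then e else 0))^2))" for e :: real
  have Fobj: "F e = objective A y lam n N G w (xs + e \<cdot>\<^sub>v unit_vec n i)" for e
  proof -
    note de = dir_entries[OF A xs i, where e=e]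
    have 1: "(\<Sum>r<m. ((A *\<^sub>v (xs + e \<cdot>\<^sub>v unit_vec n i)) $ r - y $ r)^2) = (\<Sum>r<m. (R r + e * a r)^2)"
      using de(1) by (intro sum.cong) (auto simp: R_def a_def algebra_simps)
    have 2: "(\<Sum>l\<in>G s. ((xs + e \<cdot>\<^sub>v unit_vec n i) $ l)^2) = (\<Sum>l\<in>G s. (xs $ l + (if l = i then e else 0))^2)"
      if "s < N" for s
    proof (intro sum.cong refl)
      fix l assume "l \<in> G s" then have "l < n" using groups_finite(2)[OF cover that] by auto
      then show "((xs + e \<cdot>\<^sub>v unit_vec n i) $ l)^2 = (xs $ l + (if l = i then e else 0))^2"
        using de(2) by simp
    qed
    show ?thesis unfolding obj_formula[OF cover wpos A y de(3)] F_def 1 using 2 by simp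
  qed
  have F0: "F 0 = objective A y lam n N G w xs"
  proof -
    have "xs + 0 \<cdot>\<^sub>v unit_vec n i = xs" using xs by (intro eq_vecI) auto
    then show ?thesis using Fobj[of 0] by simp
  qed
  have Qpos: "Q s > 0" if "s < N" "i \<in> G s" for s
  proof -
    have "(xs $ i)^2 \<le> Q s" unfolding Q_def
      by (rule member_le_sum) (use that groups_finite[OF cover that(1)] in auto)
    moreover have "(xs $ i)^2 > 0" using xi by simp
    ultimately show ?thesis by linarith
  qed
  define D2 where "D2 s = (if i \<in> G s then w s * (inverse (sqrt (Q s)) / 2 * (2 * xs $ i)) else 0)" for s
  have dinner: "((\<lambda>e. \<Sum>l\<in>G s. (xs $ l + (if l = i then e else 0))^2) has_real_derivative 2 * xs $ i) (at 0)"
    if "s < N" "i \<in> G s" for s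
  proof -
    have "((\<lambda>e. \<Sum>l\<in>G s. (xs $ l + (if l = i then e else 0))^2) has_real_derivative
          (\<Sum>l\<in>G s. if l = i then 2 * xs $ i else 0)) (at 0)"
    proof (rule DERIV_sum)
      fix l assume "l \<in> G s"
      show "((\<lambda>e. (xs $ l + (if l = i then e else 0))^2) has_real_derivative (if l = i then 2 * xs $ i else 0)) (at 0)"
      proof (cases "l = i")
        case True
        then show ?thesis by (auto intro!: derivative_eq_intros)
      next
        case False
        then show ?thesis by simp
      qed
    qed
    moreover have "(\<Sum>l\<in>G s. if l = i then 2 * xs $ i else 0) = 2 * xs $ i"
      using that groups_finite[OF cover that(1)] by (simp add: sum.delta')
    ultimately show ?thesis by simp
  qed
  have douter: "((\<lambda>e. w s * sqrt (\<Sum>l\<in>G s. (xs $ l + (if l = i then e else 0))^2)) has_real_derivative D2 s) (at 0)"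
    if "s < N" for s
  proof (cases "i \<in> G s")
    case True
    have "((\<lambda>e. sqrt (\<Sum>l\<in>G s. (xs $ l + (if l = i then e else 0))^2)) has_real_derivative
           inverse (sqrt (Q s)) / 2 * (2 * xs $ i)) (at 0)"
    proof -
      have g0: "(\<Sum>l\<in>G s. (xs $ l + (if l = i then 0 else 0))^2) = Q s" by (simp add: Q_def)
      have "(sqrt has_real_derivative inverse (sqrt (Q s)) / 2) (at (\<Sum>l\<in>G s. (xs $ l + (if l = i then 0 else 0))^2))"
        unfolding g0 using Qpos[OF that True] by (rule DERIV_real_sqrt)
      from DERIV_chain2[OF this dinner[OF that True]] show ?thesis by simp
    qed
    then show ?thesis unfolding D2_def using True by (auto intro: DERIV_cmult)
  next
    case False
    then have "(\<lambda>e. w s * sqrt (\<Sum>l\<in>G s. (xs $ l + (if l = i then e else 0))^2)) = (\<lambda>e. w s * sqrt (Q s))"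
      unfolding Q_def by (intro ext arg_cong[where f="\<lambda>u. w s * sqrt u"] sum.cong) auto
    then show ?thesis unfolding D2_def using False by simp
  qed
  have dquad: "((\<lambda>e. (R r + e * a r)^2) has_real_derivative 2 * R r * a r) (at 0)" for r
    by (auto intro!: derivative_eq_intros)
  have DF: "(F has_real_derivative (1 / (2 * lam) * (\<Sum>r<m. 2 * R r * a r) + (\<Sum>s<N. D2 s))) (at 0)"
    unfolding F_def
    by (intro DERIV_add DERIV_cmult DERIV_sum dquad douter) auto
  have "1 / (2 * lam) * (\<Sum>r<m. 2 * R r * a r) + (\<Sum>s<N. D2 s) = 0"
  proof (rule DERIV_local_min[OF DF, of 1])
    show "\<forall>y. \<bar>0 - y\<bar> < 1 \<longrightarrow> F 0 \<le> F y"
    proof (intro allI impI)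
      fix e :: real
      have "F 0 = objective A y lam n N G w xs" by (rule F0)
      also have "\<dots> \<le> objective A y lam n N G w (xs + e \<cdot>\<^sub>v unit_vec n i)"
        using xs_min dir_entries(3)[OF A xs i] by blast
      also have "\<dots> = F e" by (rule Fobj[symmetric])
      finally show "F 0 \<le> F e" .
    qed
  qed simp
  moreover have "(\<Sum>s<N. D2 s) = xs $ i * (\<Sum>s<N. if i \<in> G s then w s / sqrt (Q s) else 0)"
    unfolding sum_distrib_left D2_def by (intro sum.cong) (auto simp: field_simps)
  moreover have "1 / (2 * lam) * (\<Sum>r<m. 2 * R r * a r) = (1 / lam) * (\<Sum>r<m. A $$ (r, i) * ((A *\<^sub>v xs) $ r - y $ r))"
  proof -
    have "(\<Sum>r<m. 2 * R r * a r) = 2 * (\<Sum>r<m. A $$ (r, i) * ((A *\<^sub>v xs) $ r - y $ r))"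
      unfolding R_def a_def sum_distrib_left by (intro sum.cong) auto
    then show ?thesis by simp
  qed
  ultimately show ?thesis unfolding Q_def using lam by (simp add: field_simps)
qed



lemma sum_single_r:
  fixes f :: "nat \<Rightarrow> real"
  assumes "g < n"
  shows "(\<Sum>c\<in>{0..<n}. f c * (if c = g then a else 0)) = f g * a"
proof -
  have "(\<Sum>c\<in>{0..<n}. f c * (if c = g then a else 0)) = (\<Sum>c\<in>{0..<n}. (if g = c then f c * a else 0))"
    by (intro sum.cong) auto
  then show ?thesis using assms by simp
qed

lemma mult_entry:
  fixes A B :: "real mat"
  assumes "A \<in> carrier_mat a b" "B \<in> carrier_mat b c" "i < a" "j < c"
  shows "(A * B) $$ (i, j) = (\<Sum>k\<in>{0..<b}. A $$ (i, k) * B $$ (k, j))"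
  using assms by (auto simp: scalar_prod_def intro!: sum.cong)

lemma Lhat_entry:
  assumes r: "r < pdim N G" and c: "c < n"
  shows "Lhat n N G w x $$ (r, c) =
    (if r \<in> Eset_z N G x \<and> c \<notin> Eset_x n N G x then 0 else Lop n N G w $$ (r, c))"
proof -
  define L where "L = Lop n N G w"
  define P where "P = P_Tz N G x"
  define Q where "Q = P_Tx_perp n N G x"
  define p where "p = pdim N G"
  have L: "L \<in> carrier_mat p n" by (simp add: L_def Lop_def p_def)
  have P: "P \<in> carrier_mat p p" by (simp add: P_def P_Tz_def coord_proj_def p_def)
  have Q: "Q \<in> carrier_mat n n" unfolding Q_def P_Tx_perp_def
    by (rule minus_carrier_mat) (simp add: P_Tx_def coord_proj_def)
  have PL: "(P * L) \<in> carrier_mat p n" using P L by simp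
  have PLe: "(P * L) $$ (r, k) = (if r \<in> Eset_z N G x then 1 else 0) * L $$ (r, k)" if k: "k < n" for k
  proof -
    have "(P * L) $$ (r, k) = (\<Sum>j\<in>{0..<p}. P $$ (r, j) * L $$ (j, k))"
      using mult_entry[OF P L] r k by (simp add: p_def)
    also have "\<dots> = (\<Sum>j\<in>{0..<p}. (if j = r then (if r \<in> Eset_z N G x then 1 else 0) else 0) * L $$ (j, k))"
      using r by (intro sum.cong) (auto simp: P_def P_Tz_def coord_proj_def p_def)
    also have "\<dots> = (if r \<in> Eset_z N G x then 1 else 0) * L $$ (r, k)"
      using r by (intro sum_single) (simp add: p_def)
    finally show ?thesis .
  qed
  have "(P * L * Q) $$ (r, c) = (\<Sum>k\<in>{0..<n}. (P * L) $$ (r, k) * Q $$ (k, c))"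
    using mult_entry[OF PL Q] r c by (simp add: p_def)
  also have "\<dots> = (\<Sum>k\<in>{0..<n}. (P * L) $$ (r, k) * (if k = c then (if c \<in> Eset_x n N G x then 0 else 1) else 0))"
    using c by (intro sum.cong) (auto simp: Q_def P_Tx_perp_def P_Tx_def coord_proj_def)
  also have "\<dots> = (P * L) $$ (r, c) * (if c \<in> Eset_x n N G x then 0 else 1)"
    using c by (rule sum_single_r)
  finally have e: "(P * L * Q) $$ (r, c) = (if r \<in> Eset_z N G x then 1 else 0) * L $$ (r, c) * (if c \<in> Eset_x n N G x then 0 else 1)"
    using PLe[OF c] by simp
  have "Lhat n N G w x $$ (r, c) = L $$ (r, c) - (P * L * Q) $$ (r, c)"
  proof -
    have "P * L * Q \<in> carrier_mat p n" using PL Q by simp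
    then show ?thesis unfolding Lhat_def L_def[symmetric] P_def[symmetric] Q_def[symmetric]
      using r c P L Q by (simp add: p_def)
  qed
  then show ?thesis using e by (simp add: L_def)
qed

lemma Lhat_carrier: "Lhat n N G w x \<in> carrier_mat (pdim N G) n"
proof -
  have Q: "P_Tx_perp n N G x \<in> carrier_mat n n" unfolding P_Tx_perp_def
    by (rule minus_carrier_mat) (simp add: P_Tx_def coord_proj_def)
  have L: "Lop n N G w \<in> carrier_mat (pdim N G) n" by (simp add: Lop_def)
  have P: "P_Tz N G x \<in> carrier_mat (pdim N G) (pdim N G)" by (simp add: P_Tz_def coord_proj_def)
  show ?thesis unfolding Lhat_def
    by (rule minus_carrier_mat, rule mult_carrier_mat[OF mult_carrier_mat[OF P L] Q])
qed

lemma Lhat_offdiag: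
  assumes r: "r < pdim N G" and j: "j < n" and c: "c < n" and jc: "j \<noteq> c"
  shows "Lhat n N G w x $$ (r, j) * Lhat n N G w x $$ (r, c) = 0"
  using assms by (simp add: Lhat_entry Lop_def Let_def)

lemma M_mult:
  assumes z: "z \<in> carrier_vec n" and j: "j < n"
  shows "((Lhat n N G w x)\<^sup>T * Lhat n N G w x *\<^sub>v z) $ j =
     (\<Sum>r\<in>{0..<pdim N G}. (Lhat n N G w x $$ (r, j))^2) * z $ j"
proof -
  define Lh where "Lh = Lhat n N G w x"
  have Lh: "Lh \<in> carrier_mat (pdim N G) n" by (simp add: Lh_def Lhat_carrier)
  have LT: "Lh\<^sup>T \<in> carrier_mat n (pdim N G)" using Lh by simp
  have Me: "(Lh\<^sup>T * Lh) $$ (j, c) = (if c = j then (\<Sum>r\<in>{0..<pdim N G}. (Lh $$ (r, j))^2) else 0)"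
    if c: "c < n" for c
  proof -
    have "(Lh\<^sup>T * Lh) $$ (j, c) = (\<Sum>r\<in>{0..<pdim N G}. Lh\<^sup>T $$ (j, r) * Lh $$ (r, c))"
      by (rule mult_entry[OF LT Lh j c])
    also have "\<dots> = (\<Sum>r\<in>{0..<pdim N G}. Lh $$ (r, j) * Lh $$ (r, c))"
      using Lh j by (intro sum.cong) auto
    also have "\<dots> = (if c = j then (\<Sum>r\<in>{0..<pdim N G}. (Lh $$ (r, j))^2) else 0)"
    proof (cases "c = j")
      case True then show ?thesis by (simp add: power2_eq_square)
    next
      case False
      have z: "\<forall>r\<in>{0..<pdim N G}. Lh $$ (r, j) * Lh $$ (r, c) = 0"
        using Lhat_offdiag[of _ N G j n c w x] j c False by (simp add: Lh_def)
      show ?thesis using False sum.neutral[OF z] by simp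
    qed
    finally show ?thesis .
  qed
  have Mc: "Lh\<^sup>T * Lh \<in> carrier_mat n n" using Lh by simp
  have "((Lh\<^sup>T * Lh) *\<^sub>v z) $ j = row (Lh\<^sup>T * Lh) j \<bullet> z"
    by (rule index_mult_mat_vec) (use Lh j in simp)
  also have "\<dots> = (\<Sum>c\<in>{0..<n}. (Lh\<^sup>T * Lh) $$ (j, c) * z $ c)"
    unfolding scalar_prod_def using Mc z j by (intro sum.cong) auto
  also have "\<dots> = (\<Sum>c\<in>{0..<n}. (if c = j then (\<Sum>r\<in>{0..<pdim N G}. (Lh $$ (r, j))^2) else 0) * z $ c)"
    using Me by (intro sum.cong) auto
  also have "\<dots> = (\<Sum>r\<in>{0..<pdim N G}. (Lh $$ (r, j))^2) * z $ j"
    using j by (rule sum_single)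
  finally show ?thesis by (simp add: Lh_def)
qed



lemma mat_inverse_some:
  fixes M :: "real mat"
  assumes M: "M \<in> carrier_mat n n" and inv: "invertible_mat M"
  shows "\<exists>B. mat_inverse M = Some B"
proof (cases "mat_inverse M")
  case None
  obtain B where MB: "M * B = 1\<^sub>m (dim_row M)" and BM: "B * M = 1\<^sub>m (dim_row B)"
    using inv unfolding invertible_mat_def inverts_mat_def by blast
  have "dim_col (M * B) = dim_row M" using MB by simp
  then have "dim_col B = n" using M by simp
  moreover have "dim_col (B * M) = dim_row B" using BM by simp
  then have "dim_row B = n" using M by simp
  ultimately have B: "B \<in> carrier_mat n n" by auto
  have "M \<in> Units (ring_mat TYPE(real) n ())"
    unfolding Units_def using M B MB BM by (auto simp: ring_mat_simps)
  then show ?thesis using mat_inverse(1)[OF M None, where b="()"] by blast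
qed simp

theorem proposition3p7:
  fixes n N m :: nat and G :: "nat \<Rightarrow> nat set" and w :: "nat \<Rightarrow> real"
    and A :: "real mat" and y xs :: "real vec" and lam :: real
  assumes groups_nonempty: "\<forall>i<N. G i \<noteq> {}"
    and groups_cover: "(\<Union>i\<in>{..<N}. G i) = {0..<n}"
    and weights_pos: "\<forall>i<N. w i > 0"
    and A_dim: "A \<in> carrier_mat m n"
    and y_dim: "y \<in> carrier_vec m"
    and lam_pos: "lam > 0"
    and xs_dim: "xs \<in> carrier_vec n"
    and xs_min: "\<forall>x \<in> carrier_vec n. objective A y lam n N G w xs \<le> objective A y lam n N G w x"
    and Lhat_inv: "invertible_mat ((Lhat n N G w xs)\<^sup>T * Lhat n N G w xs)"
  shows "let \<beta> = (- 1 / lam) \<cdot>\<^sub>v (A\<^sup>T *\<^sub>v (A *\<^sub>v xs - y));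
             Lh = Lhat n N G w xs;
             umin = Lh *\<^sub>v (the (mat_inverse (Lh\<^sup>T * Lh)) *\<^sub>v \<beta>);
             udag = vec (pdim N G) (\<lambda>r. let t = blkidx N G r in
                      if subv xs (G t) = 0\<^sub>v (card (G t)) then umin $ r
                      else xs $ gelem (G t) (r - off G t) / enorm (subv xs (G t)))
         in \<forall>t<N. enorm (blk G udag t) \<le> enorm (subv \<beta> (G t)) / w t"
proof -
  define \<beta> where "\<beta> = (- 1 / lam) \<cdot>\<^sub>v (A\<^sup>T *\<^sub>v (A *\<^sub>v xs - y))"
  define Lh where "Lh = Lhat n N G w xs"
  define M where "M = Lh\<^sup>T * Lh"
  define zz where "zz = the (mat_inverse M) *\<^sub>v \<beta>"
  define umin where "umin = Lh *\<^sub>v zz"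
  define udag where "udag = vec (pdim N G) (\<lambda>r. let t = blkidx N G r in
                      if subv xs (G t) = 0\<^sub>v (card (G t)) then umin $ r
                      else xs $ gelem (G t) (r - off G t) / enorm (subv xs (G t)))"
  define p where "p = pdim N G"
  note fin = groups_finite(1)[OF groups_cover] and sub = groups_finite(2)[OF groups_cover]
  have Lh: "Lh \<in> carrier_mat p n" by (simp add: Lh_def p_def Lhat_carrier)
  have M: "M \<in> carrier_mat n n" using Lh by (simp add: M_def)
  have beta: "\<beta> \<in> carrier_vec n"
  proof -
    have At: "A\<^sup>T \<in> carrier_mat n m" using A_dim by simp
    have "A *\<^sub>v xs - y \<in> carrier_vec m" using A_dim xs_dim y_dim by simp
    then show ?thesis unfolding \<beta>_def smult_carrier_vec by (rule mult_mat_vec_carrier[OF At])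
  qed
  have beta_idx: "\<beta> $ l = (- 1 / lam) * (\<Sum>r<m. A $$ (r, l) * ((A *\<^sub>v xs) $ r - y $ r))"
    if l: "l < n" for l
  proof -
    have "\<beta> $ l = (- 1 / lam) * (row A\<^sup>T l \<bullet> (A *\<^sub>v xs - y))"
      using A_dim l by (simp add: \<beta>_def)
    also have "row A\<^sup>T l \<bullet> (A *\<^sub>v xs - y) = (\<Sum>r<m. A $$ (r, l) * ((A *\<^sub>v xs) $ r - y $ r))"
      using A_dim y_dim l by (simp add: scalar_prod_def atLeast0LessThan)
    finally show ?thesis .
  qed
  obtain B where B: "mat_inverse M = Some B"
    using mat_inverse_some[OF M] Lhat_inv by (auto simp: M_def Lh_def)
  have MB: "M * B = 1\<^sub>m n" and Bc: "B \<in> carrier_mat n n" using mat_inverse(2)[OF M B] by auto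
  have zz: "zz \<in> carrier_vec n" using Bc beta by (simp add: zz_def B)
  have Mz: "M *\<^sub>v zz = \<beta>"
  proof -
    have "M *\<^sub>v zz = (M * B) *\<^sub>v \<beta>" using M Bc beta by (simp add: zz_def B)
    then show ?thesis using MB beta by simp
  qed
  define D where "D j = (\<Sum>r\<in>{0..<p}. (Lh $$ (r, j))^2)" for j
  have Dz: "D j * zz $ j = \<beta> $ j" if "j < n" for j
  proof -
    have "(M *\<^sub>v zz) $ j = D j * zz $ j"
      unfolding M_def Lh_def D_def p_def by (rule M_mult[OF zz that])
    then show ?thesis using Mz by simp
  qed
  have Lh_inact: "Lh $$ (off G t + k, c) = (if c = gelem (G t) k then w t else 0)"
    if t: "t < N" and z: "subv xs (G t) = 0\<^sub>v (card (G t))" and k: "k < card (G t)" and c: "c < n" for t k c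
  proof -
    have "t \<notin> Iset N G xs" using z by (simp add: Iset_def)
    moreover have "off G t + k \<notin> Eset_z N G xs"
    proof
      assume "off G t + k \<in> Eset_z N G xs"
      then obtain s where s: "s \<in> Iset N G xs" "off G t + k \<in> Jblock G s"
        unfolding Eset_z_def by blast
      then have "s \<noteq> t" using \<open>t \<notin> Iset N G xs\<close> by blast
      then show False using Jblock_other[of k G t s] k s(2) by blast
    qed
    ultimately show ?thesis
      using Lhat_entry[OF off_lt_pdim[of t N k G] c, of w xs] Lop_entry[of t N k G c n w] t k c
      by (simp add: Lh_def)
  qed
  have D_ge: "D j \<ge> (w t)^2"
    if t: "t < N" and z: "subv xs (G t) = 0\<^sub>v (card (G t))" and j: "j \<in> G t" for t j
  proof -
    obtain k where k: "k < card (G t)" and gk: "gelem (G t) k = j"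
      using gelem_surj[OF fin[OF t] j] by blast
    have jn: "j < n" using sub[OF t] j by auto
    have r0: "off G t + k \<in> {0..<p}" using off_lt_pdim[of t N k G] t k by (simp add: p_def)
    have "(Lh $$ (off G t + k, j))^2 \<le> D j"
      unfolding D_def by (rule member_le_sum[OF r0]) auto
    moreover have "Lh $$ (off G t + k, j) = w t" using Lh_inact[OF t z k jn] gk by simp
    ultimately show ?thesis by simp
  qed
  have umin_inact: "umin $ (off G t + k) = w t * zz $ gelem (G t) k"
    if t: "t < N" and z: "subv xs (G t) = 0\<^sub>v (card (G t))" and k: "k < card (G t)" for t k
  proof -
    have r: "off G t + k < p" using off_lt_pdim[of t N k G] t k by (simp add: p_def)
    have gn: "gelem (G t) k < n" using sub[OF t] gelem_in[OF fin[OF t] k] by auto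
    have "umin $ (off G t + k) = (\<Sum>c\<in>{0..<n}. Lh $$ (off G t + k, c) * zz $ c)"
      using Lh zz r by (simp add: umin_def scalar_prod_def)
    also have "\<dots> = (\<Sum>c\<in>{0..<n}. (if c = gelem (G t) k then w t else 0) * zz $ c)"
      using Lh_inact[OF t z k] by (intro sum.cong) auto
    also have "\<dots> = w t * zz $ gelem (G t) k" by (rule sum_single[OF gn])
    finally show ?thesis .
  qed
  have main: "enorm (blk G udag t) \<le> enorm (subv \<beta> (G t)) / w t" if t: "t < N" for t
  proof -
    have wt: "w t > 0" using weights_pos t by simp
    define E where "E = enorm (subv xs (G t))"
    have blk_eq: "enorm (blk G udag t) = sqrt (\<Sum>k<card (G t).
        (if subv xs (G t) = 0\<^sub>v (card (G t)) then umin $ (off G t + k) else xs $ gelem (G t) k / E)^2)"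
    proof -
      have "\<And>k. k < card (G t) \<Longrightarrow> udag $ (off G t + k) =
        (if subv xs (G t) = 0\<^sub>v (card (G t)) then umin $ (off G t + k) else xs $ gelem (G t) k / E)"
        using off_lt_pdim[of t N _ G] blkidx_eq[of t N _ G] t by (simp add: udag_def E_def Let_def)
      then show ?thesis by (simp add: blk_def enorm_vec)
    qed
    have enb: "enorm (subv \<beta> (G t)) = sqrt (\<Sum>l\<in>G t. (\<beta> $ l)^2)" by (rule enorm_subv[OF fin[OF t]])
    show ?thesis
    proof (cases "subv xs (G t) = 0\<^sub>v (card (G t))")
      case True
      have "enorm (blk G udag t) = sqrt (\<Sum>k<card (G t). (w t * zz $ gelem (G t) k)^2)"
        unfolding blk_eq using True umin_inact[OF t True] by simp
      also have "\<dots> = sqrt (\<Sum>l\<in>G t. (w t * zz $ l)^2)"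
        using sum_gelem[OF fin[OF t], of "\<lambda>l. (w t * zz $ l)^2"] by simp
      also have "\<dots> \<le> sqrt (\<Sum>l\<in>G t. (\<beta> $ l / w t)^2)"
      proof (intro real_sqrt_le_mono sum_mono)
        fix l assume l: "l \<in> G t"
        have ln: "l < n" using sub[OF t] l by auto
        have Dl: "D l \<ge> (w t)^2" by (rule D_ge[OF t True l])
        have Dpos: "D l > 0" using Dl wt by (smt (verit) zero_less_power)
        have zl: "zz $ l = \<beta> $ l / D l" using Dz[OF ln] Dpos by (simp add: field_simps)
        have "\<bar>w t * zz $ l\<bar> = w t * \<bar>\<beta> $ l\<bar> / D l" using wt Dpos by (simp add: zl abs_mult)
        also have "\<dots> \<le> w t * \<bar>\<beta> $ l\<bar> / (w t)^2"
          by (rule divide_left_mono) (use Dl wt Dpos in auto)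
        also have "\<dots> = \<bar>\<beta> $ l / w t\<bar>" using wt by (simp add: power2_eq_square)
        finally have h: "\<bar>w t * zz $ l\<bar> \<le> \<bar>\<beta> $ l / w t\<bar>" .
        show "(w t * zz $ l)^2 \<le> (\<beta> $ l / w t)^2"
          using h abs_le_square_iff by blast
      qed
      also have "\<dots> = sqrt (\<Sum>l\<in>G t. (\<beta> $ l)^2) / w t"
        using wt by (simp add: power_divide sum_divide_distrib[symmetric] real_sqrt_divide)
      finally show ?thesis using enb by simp
    next
      case False
      define Q where "Q s = (\<Sum>l\<in>G s. (xs $ l)^2)" for s
      have "\<exists>k<card (G t). xs $ gelem (G t) k \<noteq> 0"
      proof (rule ccontr)
        assume "\<not> ?thesis"
        then have "subv xs (G t) = 0\<^sub>v (card (G t))" by (intro eq_vecI) (auto simp: subv_def)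
        then show False using False by simp
      qed
      then obtain k where k: "k < card (G t)" and xk: "xs $ gelem (G t) k \<noteq> 0" by blast
      have Qpos: "Q t > 0"
      proof -
        have "(xs $ gelem (G t) k)^2 \<le> Q t" unfolding Q_def
          by (rule member_le_sum) (use gelem_in[OF fin[OF t] k] fin[OF t] in auto)
        moreover have "(xs $ gelem (G t) k)^2 > 0" using xk by simp
        ultimately show ?thesis by linarith
      qed
      have Qnn: "Q s \<ge> 0" for s unfolding Q_def by (simp add: sum_nonneg)
      have EQ: "E = sqrt (Q t)" by (simp add: E_def Q_def enorm_subv[OF fin[OF t]])
      have "enorm (blk G udag t) = sqrt (\<Sum>k<card (G t). (xs $ gelem (G t) k / E)^2)"
        unfolding blk_eq using False by simp
      also have "\<dots> = sqrt (\<Sum>l\<in>G t. (xs $ l / E)^2)"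
        using sum_gelem[OF fin[OF t], of "\<lambda>l. (xs $ l / E)^2"] by simp
      also have "\<dots> = sqrt (Q t / E^2)"
        by (simp add: Q_def power_divide sum_divide_distrib)
      also have "\<dots> = 1" using Qpos EQ by simp
      finally have one: "enorm (blk G udag t) = 1" .
      have bl: "(\<beta> $ l)^2 \<ge> (xs $ l)^2 * ((w t)^2 / Q t)" if l: "l \<in> G t" for l
      proof (cases "xs $ l = 0")
        case True then show ?thesis by simp
      next
        case xl: False
        have ln: "l < n" using sub[OF t] l by auto
        define C where "C = (\<Sum>s<N. if l \<in> G s then w s / sqrt (Q s) else 0)"
        have bC: "\<beta> $ l = xs $ l * C"
          unfolding C_def Q_def using deriv_opt[OF groups_cover weights_pos A_dim y_dim lam_pos xs_dim xs_min ln xl] beta_idx[OF ln]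
          by simp
        have nn: "0 \<le> (if l \<in> G s then w s / sqrt (Q s) else 0)" if "s < N" for s
        proof -
          have "0 \<le> w s" using weights_pos that by (simp add: less_imp_le)
          moreover have "0 \<le> sqrt (Q s)" using Qnn by simp
          ultimately show ?thesis by simp
        qed
        have "w t / sqrt (Q t) \<le> C"
        proof -
          have "(if l \<in> G t then w t / sqrt (Q t) else 0) \<le> C"
            unfolding C_def
            by (rule member_le_sum) (use t nn in auto)
          then show ?thesis using l by simp
        qed
        moreover have "0 \<le> w t / sqrt (Q t)" using nn[OF t] l by simp
        ultimately have "(w t / sqrt (Q t))^2 \<le> C^2" by (rule power_mono)
        then have "(w t)^2 / Q t \<le> C^2" using Qpos by (simp add: power_divide)
        then have "(xs $ l)^2 * ((w t)^2 / Q t) \<le> (xs $ l)^2 * C^2"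
          by (rule mult_left_mono) simp
        then show ?thesis by (simp add: bC power_mult_distrib)
      qed
      have "(w t)^2 = (\<Sum>l\<in>G t. (xs $ l)^2 * ((w t)^2 / Q t))"
      proof -
        have "(\<Sum>l\<in>G t. (xs $ l)^2 * ((w t)^2 / Q t)) = Q t * ((w t)^2 / Q t)"
          unfolding sum_distrib_right[symmetric] Q_def ..
        then show ?thesis using Qpos by simp
      qed
      also have "\<dots> \<le> (\<Sum>l\<in>G t. (\<beta> $ l)^2)" by (rule sum_mono) (rule bl)
      finally have "sqrt ((w t)^2) \<le> sqrt (\<Sum>l\<in>G t. (\<beta> $ l)^2)" by (rule real_sqrt_le_mono)
      then have "w t \<le> enorm (subv \<beta> (G t))" using wt enb by simp
      then show ?thesis using one wt by simp
    qed
  qed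
  show ?thesis
    unfolding Let_def
    using main unfolding udag_def umin_def zz_def M_def Lh_def \<beta>_def Let_def by blast
qed


end
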